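(* Let $\lambda>0$. For any $\alpha_1,\alpha_2>0$ there exists $\alpha_3=\alpha_3(\alpha_1,\alpha_2)>0$ such that, for every $n$, $\rho(u)\le\alpha_3$ for all $u\in X_0(\Omega)$ with $I_{n,\lambda}(u)\le\alpha_1$ and $\|u\|_{p_n}\le\alpha_2$.
   Context: Let $N\ge3$, $s\in(0,1)$ with $s>\frac12$ if $N=3$, $2^*=\frac{2N}{N-2}$, and $p\in(2+\frac{4s}{N-2},2^* )$ if $N>6-4s$, $p\in(2^*-1,2^* )$ if $N\le6-4s$. $\Omega\subset\mathbb{R}^N$ bounded open with $C^{1,\alpha}$ boundary; $X_0(\Omega)=\{u\in H^1(\mathbb{R}^N):u|_\Omega\in H^1_0(\Omega),\ u=0\text{ a.e. outside }\Omega\}$ with norm $\rho(u)=(\|\nabla u\|_2^2+[u]_s^2)^{1/2}$, $[u]_s^2=\iint\frac{|u(x)-u(y)|^2}{|x-y|^{N+2s}}$. $p_n\in(p,2^* )$ with $p_n\to2^*$. $I_{n,\lambda}(u)=\frac12\rho(u)^2-\frac\lambda p\|u\|_p^p-\frac1{p_n}\|u\|_{p_n}^{p_n}$; $\|\cdot\|_q$ denotes the $L^q$ norm. *)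

theory Defs
  imports "HOL-Analysis.Analysis"
begin

fun dder :: "'a::euclidean_space list \<Rightarrow> ('a \<Rightarrow> real) \<Rightarrow> 'a \<Rightarrow> real" where
  "dder [] f = f"
| "dder (v # vs) f = (\<lambda>x. frechet_derivative (dder vs f) (at x) v)"

definition smooth_fun :: "('a::euclidean_space \<Rightarrow> real) \<Rightarrow> bool" where
  "smooth_fun f \<longleftrightarrow> (\<forall>vs x. dder vs f differentiable (at x))"

definition test_fun :: "'a::euclidean_space set \<Rightarrow> ('a \<Rightarrow> real) \<Rightarrow> bool" where
  "test_fun U \<phi> \<longleftrightarrow> smooth_fun \<phi> \<and> compact (closure {x. \<phi> x \<noteq> 0})
      \<and> closure {x. \<phi> x \<noteq> 0} \<subseteq> U"

definition grad :: "('a::euclidean_space \<Rightarrow> real) \<Rightarrow> 'a \<Rightarrow> 'a" where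
  "grad \<phi> x = (\<Sum>i\<in>Basis. frechet_derivative \<phi> (at x) i *\<^sub>R i)"

definition weak_grad_on :: "'a::euclidean_space set \<Rightarrow> ('a \<Rightarrow> real) \<Rightarrow> ('a \<Rightarrow> 'a) \<Rightarrow> bool" where
  "weak_grad_on U u g \<longleftrightarrow>
     (\<lambda>x. indicator U x * u x) \<in> borel_measurable lebesgue \<and>
     (\<lambda>x. indicator U x *\<^sub>R g x) \<in> borel_measurable lebesgue \<and>
     (\<forall>\<phi>. test_fun U \<phi> \<longrightarrow> (\<forall>i\<in>Basis.
        set_integrable lebesgue U (\<lambda>x. u x * frechet_derivative \<phi> (at x) i) \<and>
        set_integrable lebesgue U (\<lambda>x. (g x \<bullet> i) * \<phi> x) \<and>
        (LINT x:U|lebesgue. u x * frechet_derivative \<phi> (at x) i)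
          = - (LINT x:U|lebesgue. (g x \<bullet> i) * \<phi> x)))"

definition H1_on :: "'a::euclidean_space set \<Rightarrow> ('a \<Rightarrow> real) \<Rightarrow> bool" where
  "H1_on U u \<longleftrightarrow> (\<exists>g. weak_grad_on U u g \<and>
     (\<integral>\<^sup>+x\<in>U. ennreal ((u x)\<^sup>2) \<partial>lebesgue) < \<infinity> \<and>
     (\<integral>\<^sup>+x\<in>U. ennreal ((norm (g x))\<^sup>2) \<partial>lebesgue) < \<infinity>)"

definition H10_on :: "'a::euclidean_space set \<Rightarrow> ('a \<Rightarrow> real) \<Rightarrow> bool" where
  "H10_on U u \<longleftrightarrow> H1_on U u \<and> (\<exists>g \<phi>. weak_grad_on U u g \<and> (\<forall>k::nat. test_fun U (\<phi> k)) \<and>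
     ((\<lambda>k. (\<integral>\<^sup>+x\<in>U. ennreal ((\<phi> k x - u x)\<^sup>2) \<partial>lebesgue)
          + (\<integral>\<^sup>+x\<in>U. ennreal ((norm (grad (\<phi> k) x - g x))\<^sup>2) \<partial>lebesgue)) \<longlonglongrightarrow> 0))"

definition X0 :: "'a::euclidean_space set \<Rightarrow> ('a \<Rightarrow> real) \<Rightarrow> bool" where
  "X0 \<Omega> u \<longleftrightarrow> H1_on UNIV u \<and> H10_on \<Omega> u \<and> (AE x in lebesgue. x \<notin> \<Omega> \<longrightarrow> u x = 0)"

text \<open>C^{1,alpha} boundary: locally the region above the graph of a C^{1,alpha} function
  of the variables orthogonal to a unit direction nu.\<close>
definition C1alpha_boundary :: "real \<Rightarrow> 'a::euclidean_space set \<Rightarrow> bool" where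
  "C1alpha_boundary \<alpha> \<Omega> \<longleftrightarrow> 0 < \<alpha> \<and> \<alpha> \<le> 1 \<and>
    (\<forall>x0\<in>frontier \<Omega>. \<exists>r>0. \<exists>\<nu> (\<gamma>::'a \<Rightarrow> real). norm \<nu> = 1 \<and>
       (\<forall>x. \<gamma> x = \<gamma> (x - (x \<bullet> \<nu>) *\<^sub>R \<nu>)) \<and>
       (\<forall>x. \<gamma> differentiable (at x)) \<and>
       (\<exists>C. \<forall>x y. onorm (\<lambda>v. frechet_derivative \<gamma> (at x) v - frechet_derivative \<gamma> (at y) v)
                 \<le> C * dist x y powr \<alpha>) \<and>
       \<Omega> \<inter> ball x0 r = {x \<in> ball x0 r. x \<bullet> \<nu> > \<gamma> x})"

definition enn_powr :: "ennreal \<Rightarrow> real \<Rightarrow> ennreal" where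
  "enn_powr x a = (if x = \<infinity> then \<infinity> else ennreal (enn2real x powr a))"

definition Lpow :: "real \<Rightarrow> ('a::euclidean_space \<Rightarrow> real) \<Rightarrow> ennreal" where
  "Lpow q u = (\<integral>\<^sup>+x. ennreal (\<bar>u x\<bar> powr q) \<partial>lebesgue)"

definition Lnorm :: "real \<Rightarrow> ('a::euclidean_space \<Rightarrow> real) \<Rightarrow> ennreal" where
  "Lnorm q u = enn_powr (Lpow q u) (1 / q)"

definition gagliardo_sq :: "real \<Rightarrow> ('a::euclidean_space \<Rightarrow> real) \<Rightarrow> ennreal" where
  "gagliardo_sq s u = (\<integral>\<^sup>+z. ennreal ((u (fst z) - u (snd z))\<^sup>2
       / norm (fst z - snd z) powr (real DIM('a) + 2 * s)) \<partial>lebesgue)"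

text \<open>rho(u)^2, with g the weak gradient of u.\<close>
definition rho_sq :: "real \<Rightarrow> ('a::euclidean_space \<Rightarrow> real) \<Rightarrow> ('a \<Rightarrow> 'a) \<Rightarrow> ennreal" where
  "rho_sq s u g = (\<integral>\<^sup>+x. ennreal ((norm (g x))\<^sup>2) \<partial>lebesgue) + gagliardo_sq s u"

definition rho :: "real \<Rightarrow> ('a::euclidean_space \<Rightarrow> real) \<Rightarrow> ('a \<Rightarrow> 'a) \<Rightarrow> ennreal" where
  "rho s u g = enn_powr (rho_sq s u g) (1/2)"

definition I_fun :: "real \<Rightarrow> real \<Rightarrow> real \<Rightarrow> real \<Rightarrow> ('a::euclidean_space \<Rightarrow> real) \<Rightarrow> ('a \<Rightarrow> 'a) \<Rightarrow> ereal" where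
  "I_fun s p pn lam u g = enn2ereal (ennreal (1/2) * rho_sq s u g)
       - ereal (lam / p) * enn2ereal (Lpow p u)
       - ereal (1 / pn) * enn2ereal (Lpow pn u)"

definition crit_exp :: "nat \<Rightarrow> real" where
  "crit_exp N = 2 * real N / (real N - 2)"

end

theory Submission
  imports Defs
begin

lemma pw_bound:
  fixes t p q :: real
  assumes "0 \<le> t" "0 < p" "p \<le> q"
  shows "t powr p \<le> 1 + t powr q"
proof (cases "t \<le> 1")
  case True
  then have "t powr p \<le> 1"
    using assms powr_mono2[of p t 1] by simp
  then show ?thesis by (smt (verit) powr_ge_zero)
next
  case False
  then have "t powr p \<le> t powr q" using assms by (intro powr_mono) auto
  then show ?thesis by simp
qed

lemma lin_aux:
  fixes R x y x' y' a :: real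
  assumes "x \<le> x'" "y \<le> y'" "R/2 - x - y \<le> a"
  shows "R \<le> 2 * (a + x' + y')"
proof -
  have "R/2 \<le> a + x' + y'" using assms by linarith
  then show ?thesis by simp
qed

theorem lemma3p3:
  fixes \<Omega> :: "'a::euclidean_space set" and s p lam :: real and pn :: "nat \<Rightarrow> real"
  assumes N3: "DIM('a) \<ge> 3"
    and s: "0 < s" "s < 1" "DIM('a) = 3 \<longrightarrow> s > 1/2"
    and p_high: "real DIM('a) > 6 - 4 * s \<longrightarrow>
                   2 + 4 * s / (real DIM('a) - 2) < p \<and> p < crit_exp DIM('a)"
    and p_low: "real DIM('a) \<le> 6 - 4 * s \<longrightarrow>
                   crit_exp DIM('a) - 1 < p \<and> p < crit_exp DIM('a)"
    and \<Omega>: "bounded \<Omega>" "open \<Omega>" "\<exists>\<alpha>. C1alpha_boundary \<alpha> \<Omega>"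
    and pn: "\<And>n. p < pn n \<and> pn n < crit_exp DIM('a)" "pn \<longlonglongrightarrow> crit_exp DIM('a)"
    and lam: "lam > 0"
  shows "\<forall>\<alpha>1>0. \<forall>\<alpha>2>0. \<exists>\<alpha>3>0. \<forall>n u g.
           X0 \<Omega> u \<longrightarrow> weak_grad_on UNIV u g \<longrightarrow>
           I_fun s p (pn n) lam u g \<le> ereal \<alpha>1 \<longrightarrow>
           Lnorm (pn n) u \<le> ennreal \<alpha>2 \<longrightarrow>
           rho s u g \<le> ennreal \<alpha>3"
proof (intro allI impI)
  fix a1 a2 :: real assume a1: "a1 > 0" and a2: "a2 > 0"
  define ce where "ce = crit_exp DIM('a)"
  have D: "real DIM('a) \<ge> 3" using N3 by simp
  have ce2: "ce > 2" unfolding ce_def crit_exp_def using D by (simp add: field_simps)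
  have p0: "p > 0"
  proof (cases "real DIM('a) > 6 - 4 * s")
    case True
    then have "2 + 4 * s / (real DIM('a) - 2) < p" using p_high by blast
    moreover have "4 * s / (real DIM('a) - 2) \<ge> 0" using D s by simp
    ultimately show ?thesis by linarith
  next
    case False
    then have "ce - 1 < p" using p_low ce_def by auto
    then show ?thesis using ce2 by linarith
  qed
  have Olm: "\<Omega> \<in> lmeasurable"
    using \<Omega> by (intro bounded_set_imp_lmeasurable) auto
  define M where "M = measure lebesgue \<Omega>"
  have M0: "M \<ge> 0" unfolding M_def by simp
  have eM: "emeasure lebesgue \<Omega> = ennreal M" unfolding M_def using Olm by (simp add: emeasure_eq_measure2)
  define C where "C = max 1 a2 powr ce"
  have C0: "C \<ge> 0" unfolding C_def by simp
  define K where "K = 2 * (a1 + lam / p * (M + C) + C / p)"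
  have K0: "K \<ge> 0" unfolding K_def using a1 lam p0 M0 C0 by simp
  show "\<exists>\<alpha>3>0. \<forall>n u g.
           X0 \<Omega> u \<longrightarrow> weak_grad_on UNIV u g \<longrightarrow>
           I_fun s p (pn n) lam u g \<le> ereal a1 \<longrightarrow>
           Lnorm (pn n) u \<le> ennreal a2 \<longrightarrow>
           rho s u g \<le> ennreal \<alpha>3"
  proof (intro exI[of _ "sqrt K + 1"] conjI allI impI)
    show "sqrt K + 1 > 0" using K0 by (smt (verit) real_sqrt_ge_zero)
    fix n u g
    assume X: "X0 \<Omega> u" and wg: "weak_grad_on UNIV u g"
      and I: "I_fun s p (pn n) lam u g \<le> ereal a1"
      and L: "Lnorm (pn n) u \<le> ennreal a2"
    define q where "q = pn n"
    have pq: "p < q" "q < ce" using pn(1)[of n] unfolding q_def ce_def by auto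
    have q0: "q > 0" using pq p0 by simp
    have umeas: "u \<in> borel_measurable lebesgue"
      using wg unfolding weak_grad_on_def by simp
    have ae0: "AE x in lebesgue. x \<notin> \<Omega> \<longrightarrow> u x = 0" using X unfolding X0_def by simp
    have Lq_fin: "Lpow q u \<noteq> \<infinity>"
    proof
      assume "Lpow q u = \<infinity>"
      then have "Lnorm q u = \<infinity>" unfolding Lnorm_def enn_powr_def by simp
      then show False using L q_def by (simp add: top_unique)
    qed
    define B where "B = enn2real (Lpow q u)"
    have B0: "B \<ge> 0" unfolding B_def by simp
    have LqB: "Lpow q u = ennreal B" unfolding B_def using Lq_fin by (simp add: ennreal_enn2real_if)
    have "ennreal (B powr (1/q)) \<le> ennreal a2"
      using L Lq_fin unfolding Lnorm_def enn_powr_def q_def B_def by simp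
    then have Bq: "B powr (1/q) \<le> a2" using a2 by (simp add: ennreal_le_iff)
    have "B = (B powr (1/q)) powr q" using q0 B0 by (simp add: powr_powr)
    also have "\<dots> \<le> a2 powr q" using Bq q0 by (intro powr_mono2) auto
    also have "\<dots> \<le> max 1 a2 powr q" using a2 q0 by (intro powr_mono2) auto
    also have "\<dots> \<le> max 1 a2 powr ce" using pq by (intro powr_mono) auto
    finally have BC: "B \<le> C" unfolding C_def .
    have "Lpow p u \<le> (\<integral>\<^sup>+x. indicator \<Omega> x + ennreal (\<bar>u x\<bar> powr q) \<partial>lebesgue)"
      unfolding Lpow_def
    proof (rule nn_integral_mono_AE)
      show "AE x in lebesgue. ennreal (\<bar>u x\<bar> powr p) \<le> indicator \<Omega> x + ennreal (\<bar>u x\<bar> powr q)"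
        using ae0
      proof eventually_elim
        case (elim x)
        show ?case
        proof (cases "x \<in> \<Omega>")
          case True
          have "\<bar>u x\<bar> powr p \<le> 1 + \<bar>u x\<bar> powr q" using pw_bound[of "\<bar>u x\<bar>" p q] p0 pq by simp
          then have "ennreal (\<bar>u x\<bar> powr p) \<le> ennreal (1 + \<bar>u x\<bar> powr q)" by (rule ennreal_leI)
          then show ?thesis using True by (simp add: ennreal_plus)
        next
          case False
          then show ?thesis using elim by simp
        qed
      qed
    qed
    also have "\<dots> = emeasure lebesgue \<Omega> + Lpow q u"
      unfolding Lpow_def
      using Olm umeas by (subst nn_integral_add) (auto intro!: borel_measurable_indicator)
    also have "\<dots> = ennreal (M + B)" using eM LqB M0 B0 by (simp add: ennreal_plus)
    finally have LpMB: "Lpow p u \<le> ennreal (M + B)" .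
    then have Lp_fin: "Lpow p u \<noteq> \<infinity>" by (auto simp: top_unique)
    define A where "A = enn2real (Lpow p u)"
    have A0: "A \<ge> 0" unfolding A_def by simp
    have LpA: "Lpow p u = ennreal A" unfolding A_def using Lp_fin by (simp add: ennreal_enn2real_if)
    have AMB: "A \<le> M + B" using LpMB LpA M0 B0 by (simp add: ennreal_le_iff del: ennreal_plus)
    have R_fin: "rho_sq s u g \<noteq> \<infinity>"
    proof
      assume "rho_sq s u g = \<infinity>"
      then have "I_fun s p (pn n) lam u g = \<infinity>"
        unfolding I_fun_def using LpA LqB q_def A0 B0
        by (simp add: enn2ereal_ennreal ennreal_mult_top)
      then show False using I by simp
    qed
    define R where "R = enn2real (rho_sq s u g)"
    have R0: "R \<ge> 0" unfolding R_def by simp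
    have RR: "rho_sq s u g = ennreal R" unfolding R_def using R_fin by (simp add: ennreal_enn2real_if)
    have "ennreal (1/2) * rho_sq s u g = ennreal (R/2)" 
    proof -
      have "ennreal (1/2) * ennreal R = ennreal (1/2 * R)" using R0 by (rule ennreal_mult[symmetric, rotated]) simp
      then show ?thesis using RR by simp
    qed
    then have "I_fun s p (pn n) lam u g = ereal (R/2 - lam / p * A - B / q)"
      unfolding I_fun_def using LpA LqB q_def A0 B0 R0 by (simp add: enn2ereal_ennreal)
    then have ineq: "R/2 - lam / p * A - B / q \<le> a1" using I by simp
    have "lam / p * A \<le> lam / p * (M + C)" using AMB BC lam p0 by (intro mult_left_mono) auto
    moreover have "B / q \<le> C / p"
    proof -
      have "B / q \<le> B / p" using B0 p0 pq by (intro divide_left_mono) auto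
      also have "\<dots> \<le> C / p" using BC p0 by (simp add: divide_right_mono)
      finally show ?thesis .
    qed
    ultimately have RK: "R \<le> K" using ineq unfolding K_def by (rule lin_aux)
    have "rho s u g = ennreal (sqrt R)"
      unfolding rho_def enn_powr_def using RR R0 by (simp add: powr_half_sqrt)
    also have "\<dots> \<le> ennreal (sqrt K + 1)" using RK real_sqrt_le_mono[OF RK] by (intro ennreal_leI) linarith
    finally show "rho s u g \<le> ennreal (sqrt K + 1)" .
  qed
qed

end
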